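(* Let $z_1,\dots,z_N$ be independent with $z_i\sim\mathrm{Bernoulli}(q_i)$, $0<q_i<1$ for every $i\in[N]$, and let $S=\sum_{i=1}^Nz_i$. If $\max_{i\in[N]}q_i<1-\frac1N$, then $\Pr\{S<N\max_{i\in[N]}q_i\}>\frac14$. *)

theory Defs
  imports "HOL-Probability.Probability"
begin

end

theory Submission
  imports Defs
begin


fun bt :: "nat \<Rightarrow> real \<Rightarrow> nat \<Rightarrow> real" where
  "bt n a 0 = 1"
| "bt 0 a (Suc k) = 0"
| "bt (Suc n) a (Suc k) = (1-a) * bt n a (Suc k) + a * bt n a k"

definition pm :: "nat \<Rightarrow> real \<Rightarrow> nat \<Rightarrow> real" where
  "pm n a k = bt n a k - bt n a (Suc k)"

lemma bt_gt: "n < k \<Longrightarrow> bt n a k = 0"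
proof (induction n arbitrary: k)
  case 0 then show ?case by (cases k) auto
next
  case (Suc n) then show ?case by (cases k) auto
qed

lemma bt_diag: "bt n a n = a ^ n"
  by (induction n) (auto simp: bt_gt)

lemma pm_0: "pm 0 a k = (if k = 0 then 1 else 0)"
  by (cases k) (auto simp: pm_def)

lemma pm_Suc_0: "pm (Suc n) a 0 = (1-a) * pm n a 0"
  by (simp add: pm_def algebra_simps)

lemma pm_Suc_Suc: "pm (Suc n) a (Suc k) = (1-a) * pm n a (Suc k) + a * pm n a k"
  by (simp add: pm_def algebra_simps)

lemma pm_closed: "pm n a k = real (n choose k) * a ^ k * (1-a) ^ (n-k)"
proof (induction n arbitrary: k)
  case 0 then show ?case by (cases k) (auto simp: pm_0)
next
  case (Suc n)
  show ?case
  proof (cases k)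
    case 0 then show ?thesis using Suc by (simp add: pm_Suc_0)
  next
    case (Suc k')
    have "pm (Suc n) a (Suc k') = (1-a) * pm n a (Suc k') + a * pm n a k'" by (rule pm_Suc_Suc)
    also have "\<dots> = real (Suc n choose Suc k') * a ^ Suc k' * (1-a) ^ (Suc n - Suc k')"
    proof (cases "k' < n")
      case True
      then obtain d where d: "n = Suc (k' + d)" using less_imp_Suc_add by blast
      show ?thesis using Suc.IH unfolding d by (simp add: algebra_simps)
    next
      case False
      show ?thesis
      proof (cases "k' = n")
        case True then show ?thesis using Suc.IH by (simp add: binomial_eq_0)
      next
        case False
        with \<open>\<not> k' < n\<close> have "n < k'" by auto
        then show ?thesis using Suc.IH by (simp add: binomial_eq_0)
      qed
    qed
    finally show ?thesis using Suc by simp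
  qed
qed

lemma pm_nonneg: "0 \<le> a \<Longrightarrow> a \<le> 1 \<Longrightarrow> 0 \<le> pm n a k"
  by (simp add: pm_closed)

lemma bt_Suc_le: "0 \<le> a \<Longrightarrow> a \<le> 1 \<Longrightarrow> bt n a (Suc k) \<le> bt n a k"
  using pm_nonneg[of a n k] by (simp add: pm_def)

lemma bt_range: "0 \<le> a \<Longrightarrow> a \<le> 1 \<Longrightarrow> 0 \<le> bt n a k \<and> bt n a k \<le> 1"
proof (induction n arbitrary: k)
  case 0 then show ?case by (cases k) auto
next
  case (Suc n)
  show ?case
  proof (cases k)
    case 0 then show ?thesis by simp
  next
    case (Suc k')
    have h1: "0 \<le> bt n a (Suc k')" "bt n a (Suc k') \<le> 1" "0 \<le> bt n a k'" "bt n a k' \<le> 1"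
      using Suc.IH Suc.prems by auto
    have "0 \<le> (1-a) * bt n a (Suc k') + a * bt n a k'"
      using h1 Suc.prems by simp
    moreover have "(1-a) * bt n a (Suc k') + a * bt n a k' \<le> (1-a) * 1 + a * 1"
      using h1 Suc.prems by (intro add_mono mult_left_mono) auto
    ultimately show ?thesis using Suc by simp
  qed
qed

lemma bt_mono: "0 \<le> a \<Longrightarrow> a \<le> b \<Longrightarrow> b \<le> 1 \<Longrightarrow> bt n a k \<le> bt n b k"
proof (induction n arbitrary: k)
  case 0 then show ?case by (cases k) auto
next
  case (Suc n)
  show ?case
  proof (cases k)
    case 0 then show ?thesis by simp
  next
    case (Suc k')
    have X: "bt n a (Suc k') \<le> bt n b (Suc k')" and Y: "bt n a k' \<le> bt n b k'"
      using Suc.IH Suc.prems by auto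
    have XY: "bt n b (Suc k') \<le> bt n b k'" using bt_Suc_le Suc.prems by auto
    have "(1-a) * bt n a (Suc k') + a * bt n a k' \<le> (1-a) * bt n b (Suc k') + a * bt n b k'"
      using X Y Suc.prems by (intro add_mono mult_left_mono) auto
    also have "\<dots> = bt n b (Suc k') + a * (bt n b k' - bt n b (Suc k'))" by (simp add: algebra_simps)
    also have "\<dots> \<le> bt n b (Suc k') + b * (bt n b k' - bt n b (Suc k'))"
      using XY Suc.prems by (intro add_left_mono mult_right_mono) auto
    also have "\<dots> = (1-b) * bt n b (Suc k') + b * bt n b k'" by (simp add: algebra_simps)
    finally show ?thesis using Suc by simp
  qed
qed

lemma pm_unimodal:
  assumes "0 \<le> a" "a \<le> 1" "real (Suc n) * a \<le> real (Suc k)"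
  shows "pm n a (Suc k) \<le> pm n a k"
proof (cases "k < n")
  case False
  then have "pm n a (Suc k) = 0" by (simp add: pm_closed binomial_eq_0)
  then show ?thesis using pm_nonneg assms by simp
next
  case True
  then obtain d where d: "n = Suc (k + d)" using less_imp_Suc_add by blast
  have c: "Suc k * (n choose Suc k) = Suc d * (n choose k)"
  proof -
    have "Suc k * (Suc n choose Suc k) = Suc n * (n choose k)" by (rule Suc_times_binomial)
    then have "Suc k * (n choose k) + Suc k * (n choose Suc k) = Suc n * (n choose k)"
      by (simp add: algebra_simps)
    then show ?thesis unfolding d by (simp add: algebra_simps)
  qed
  then have c': "real (Suc k) * real (n choose Suc k) = real (Suc d) * real (n choose k)"
    by (metis of_nat_mult)
  let ?C = "real (n choose k) * a ^ k * (1-a) ^ d"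
  have C0: "0 \<le> ?C" using assms by simp
  have key: "real (Suc d) * a \<le> real (Suc k) * (1 - a)"
    using assms(3) unfolding d by (simp add: algebra_simps)
  have "real (Suc k) * pm n a (Suc k) = real (Suc k) * real (n choose Suc k) * a ^ Suc k * (1-a) ^ d"
    by (simp add: pm_closed d)
  also have "\<dots> = ?C * (real (Suc d) * a)" using c' by (simp add: algebra_simps)
  also have "\<dots> \<le> ?C * (real (Suc k) * (1 - a))" by (rule mult_left_mono[OF key C0])
  also have "\<dots> = real (Suc k) * pm n a k" by (simp add: pm_closed d algebra_simps)
  finally show ?thesis by simp
qed

lemma bt_deriv:
  "((\<lambda>a. bt (Suc n) a (Suc k)) has_real_derivative (real (Suc n) * pm n a k)) (at a)"
proof (induction n arbitrary: k a)
  case 0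
  have "((\<lambda>a. (1-a) * bt 0 a (Suc k) + a * bt 0 a k) has_real_derivative (bt 0 a k)) (at a)"
    by (cases k) (auto intro!: derivative_eq_intros)
  then show ?case by (simp add: pm_def)
next
  case (Suc n)
  have d1: "((\<lambda>a. bt (Suc n) a (Suc k)) has_real_derivative (real (Suc n) * pm n a k)) (at a)"
    by (rule Suc.IH)
  show ?case
  proof (cases k)
    case 0
    have "((\<lambda>a. (1-a) * bt (Suc n) a (Suc k) + a * 1) has_real_derivative
        (- bt (Suc n) a (Suc k) + (1-a) * (real (Suc n) * pm n a k) + 1)) (at a)"
      by (auto intro!: derivative_eq_intros d1 simp del: bt.simps)
    moreover have "- bt (Suc n) a (Suc k) + (1-a) * (real (Suc n) * pm n a k) + 1
        = real (Suc (Suc n)) * pm (Suc n) a k"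
      using 0 pm_Suc_0[of n a] by (simp add: pm_def algebra_simps)
    ultimately show ?thesis using 0 by simp
  next
    case (Suc k')
    have d2: "((\<lambda>a. bt (Suc n) a k) has_real_derivative (real (Suc n) * pm n a k')) (at a)"
      using Suc.IH[of k' a] Suc by simp
    have "((\<lambda>a. (1-a) * bt (Suc n) a (Suc k) + a * bt (Suc n) a k) has_real_derivative
        (- bt (Suc n) a (Suc k) + (1-a) * (real (Suc n) * pm n a k) + (bt (Suc n) a k + a * (real (Suc n) * pm n a k')))) (at a)"
      by (auto intro!: derivative_eq_intros d1 d2 simp del: bt.simps)
    moreover have "- bt (Suc n) a (Suc k) + (1-a) * (real (Suc n) * pm n a k) + (bt (Suc n) a k + a * (real (Suc n) * pm n a k'))
        = real (Suc (Suc n)) * pm (Suc n) a k"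
      using Suc pm_Suc_Suc[of n a k'] by (simp add: pm_def algebra_simps)
    ultimately show ?thesis by simp
  qed
qed

lemma bt_step:
  assumes j1: "1 \<le> j" and jn: "j \<le> n"
  shows "bt n (real j / real n) (Suc j) \<le> bt (Suc n) (real j / real (Suc n)) (Suc j)"
proof -
  obtain n' where n: "n = Suc n'" using j1 jn by (cases n) auto
  obtain j' where j: "j = Suc j'" using j1 by (cases j) auto
  define A where "A b = (real j - b) / real n" for b
  define \<Phi> where "\<Phi> b = (1-b) * bt n (A b) (Suc j) + b * bt n (A b) j" for b
  define c where "c = real j / real (Suc n)"
  have npos: "real n > 0" using n by simp
  have c0: "0 \<le> c" unfolding c_def by simp
  have dA: "(A has_real_derivative (-1/real n)) (at b)" for b
    unfolding A_def[abs_def] using npos by (auto intro!: derivative_eq_intros)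
  have d1: "((\<lambda>b. bt n (A b) (Suc j)) has_real_derivative (real n * pm n' (A b) j * (-1/real n))) (at b)" for b
    using DERIV_chain2[OF bt_deriv[of n' j "A b"] dA[of b]] n by simp
  have d2: "((\<lambda>b. bt n (A b) j) has_real_derivative (real n * pm n' (A b) j' * (-1/real n))) (at b)" for b
    using DERIV_chain2[OF bt_deriv[of n' j' "A b"] dA[of b]] n j by simp
  have dPhi: "(\<Phi> has_real_derivative ((A b - b) * (pm n' (A b) j' - pm n' (A b) j))) (at b)" for b
  proof -
    have "(\<Phi> has_real_derivative (- bt n (A b) (Suc j) + (1-b) * (real n * pm n' (A b) j * (-1/real n))
        + (bt n (A b) j + b * (real n * pm n' (A b) j' * (-1/real n))))) (at b)"
      unfolding \<Phi>_def[abs_def] using npos by (auto intro!: derivative_eq_intros d1 d2 simp del: bt.simps)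
    moreover have "- bt n (A b) (Suc j) + (1-b) * (real n * pm n' (A b) j * (-1/real n))
        + (bt n (A b) j + b * (real n * pm n' (A b) j' * (-1/real n)))
        = (A b - b) * (pm n' (A b) j' - pm n' (A b) j)"
    proof -
      have e: "bt n (A b) j - bt n (A b) (Suc j) = (1 - A b) * pm n' (A b) j + A b * pm n' (A b) j'"
        using pm_Suc_Suc[of n' "A b" j'] n j by (simp add: pm_def)
      show ?thesis using npos e by (simp add: field_simps)
    qed
    ultimately show ?thesis by simp
  qed
  have mono: "\<Phi> 0 \<le> \<Phi> c"
  proof (rule DERIV_nonneg_imp_nondecreasing[OF c0])
    fix b assume b: "0 \<le> b" "b \<le> c"
    have bj: "real (Suc n) * b \<le> real j"
      using b unfolding c_def by (simp add: field_simps)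
    have Ab: "b \<le> A b" unfolding A_def using bj npos by (simp add: field_simps)
    have A0: "0 \<le> A b" using Ab b by simp
    have nA: "real n * A b = real j - b" unfolding A_def using npos by simp
    have jn': "real j \<le> real n" using jn by simp
    have A1: "A b \<le> 1" unfolding A_def using b jn' npos by (simp add: field_simps)
    have "pm n' (A b) (Suc j') \<le> pm n' (A b) j'"
      using pm_unimodal[OF A0 A1, of n' j'] nA b n j by simp
    then have "0 \<le> (A b - b) * (pm n' (A b) j' - pm n' (A b) j)"
      using Ab j by simp
    then show "\<exists>y. (\<Phi> has_real_derivative y) (at b) \<and> 0 \<le> y" using dPhi by blast
  qed
  have "\<Phi> 0 = bt n (real j / real n) (Suc j)" unfolding \<Phi>_def A_def by simp
  moreover have "real j - c = real n * c" unfolding c_def by (simp add: field_simps)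
  then have "A c = c" unfolding A_def using npos by simp
  then have "\<Phi> c = bt (Suc n) (real j / real (Suc n)) (Suc j)"
    unfolding \<Phi>_def using j by (simp add: c_def del: of_nat_Suc)
  ultimately show ?thesis using mono by simp
qed

lemma bt_chain:
  assumes "1 \<le> j" "j \<le> n0" "n0 \<le> N"
  shows "bt n0 (real j / real n0) (Suc j) \<le> bt N (real j / real N) (Suc j)"
  using assms(3)
proof (induction N rule: dec_induct)
  case base then show ?case by simp
next
  case (step m)
  then show ?case using bt_step[of j m] assms by simp
qed

lemma pow_seq_step:
  assumes m: "1 \<le> m"
  shows "(real m / (real m + 1)) ^ (m+1) \<le> ((real m + 1) / (real m + 2)) ^ (m+2)"
proof -
  define x where "x = real m + 1"
  have x2: "x \<ge> 2" using m unfolding x_def by simp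
  have q: "x^2 - 1 > 0"
  proof -
    have "x^2 \<ge> 2^2" using x2 by (intro power_mono) auto
    then show ?thesis by simp
  qed
  have B: "1 + real (m+1) * (1/(x^2-1)) \<le> (1 + 1/(x^2-1)) ^ (m+1)"
  proof (rule Bernoulli_inequality)
    have "0 < 1/(x^2-1)" using q by simp
    then show "-1 \<le> 1/(x^2-1)" by linarith
  qed
  have e: "1 + 1/(x^2-1) = x^2 / ((x-1)*(x+1))"
  proof -
    have f: "(x-1)*(x+1) = x^2 - 1" by (simp add: algebra_simps power2_eq_square)
    have g: "1 + 1/b = (b+1)/b" if "b \<noteq> 0" for b :: real using that by (simp add: field_simps)
    show ?thesis unfolding f using g[of "x^2-1"] q by simp
  qed
  have mx: "real (m+1) = x" unfolding x_def by simp
  have f1: "real m / (real m + 1) = (x-1)/x" unfolding x_def by simp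
  have f2: "(real m + 1) / (real m + 2) = x/(x+1)" unfolding x_def by simp
  have split: "x/(x+1) = ((x-1)/x) * (x^2/((x-1)*(x+1)))"
  proof -
    have a: "x - 1 \<noteq> 0" "x \<noteq> 0" "x + 1 \<noteq> 0" using x2 by auto
    have "((x-1)/x) * (x^2/((x-1)*(x+1))) = ((x-1)*(x*x)) / ((x-1)*(x*(x+1)))"
      by (simp add: power2_eq_square algebra_simps)
    also have "\<dots> = (x*x)/(x*(x+1))" using a by simp
    also have "\<dots> = x/(x+1)" using a by simp
    finally show ?thesis by simp
  qed
  have P0: "0 \<le> ((x-1)/x) ^ (m+1)" using x2 by simp
  have K: "1 \<le> x/(x+1) * (1 + x/(x^2-1))"
  proof -
    have d: "(x+1)*(x^2-1) > 0" using x2 q by simp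
    have gen: "x/(x+1) * (1 + x/b) = (x*b + x*x) / ((x+1)*b)" if "b \<noteq> 0" for b
      using that x2 by (simp add: field_simps)
    have "x/(x+1) * (1 + x/(x^2-1)) = (x*(x^2-1) + x*x) / ((x+1)*(x^2-1))"
      using gen[of "x^2-1"] q by simp
    also have "x*(x^2-1) + x*x = (x+1)*(x^2-1) + 1" by (simp add: algebra_simps power2_eq_square)
    finally have e: "x/(x+1) * (1 + x/(x^2-1)) = ((x+1)*(x^2-1) + 1) / ((x+1)*(x^2-1))" .
    show ?thesis unfolding e using d by simp
  qed
  have "((x-1)/x) ^ (m+1) \<le> ((x-1)/x) ^ (m+1) * (x/(x+1) * (1 + x/(x^2-1)))"
    using mult_left_mono[OF K P0] by simp
  also have "\<dots> \<le> ((x-1)/x) ^ (m+1) * (x/(x+1) * (x^2 / ((x-1)*(x+1))) ^ (m+1))"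
    using B x2 P0 unfolding e mx by (intro mult_left_mono) auto
  also have "\<dots> = x/(x+1) * (((x-1)/x) * (x^2/((x-1)*(x+1)))) ^ (m+1)"
    unfolding power_mult_distrib by (simp only: mult_ac)
  also have "\<dots> = (x/(x+1)) ^ (m+2)" unfolding split[symmetric] by simp
  finally show ?thesis unfolding f1 f2 .
qed



lemma bt_3_1: "bt 3 (1/3) 2 = 7/27"
  by (simp add: numeral_eq_Suc)
lemma pow_seq_bound:
  assumes "2 \<le> m"
  shows "8/27 \<le> (real m / (real m + 1)) ^ (m+1)"
  using assms
proof (induction m rule: dec_induct)
  case base then show ?case by (simp add: power_divide)
next
  case (step k)
  have "(real k / (real k + 1)) ^ (k+1) \<le> ((real k + 1) / (real k + 2)) ^ (k+2)"
    using step by (intro pow_seq_step) simp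
  moreover have "(real (Suc k) / (real (Suc k) + 1)) ^ (Suc k + 1) = ((real k + 1) / (real k + 2)) ^ (k+2)"
    by (simp add: add_ac)
  ultimately show ?case using step.IH by linarith
qed

lemma bin_main:
  assumes N2: "2 \<le> N" and r1: "1 / real N < r" and r2: "r < 1"
  shows "1/4 < bt N r (Suc (nat \<lfloor>real N * r\<rfloor>))"
proof -
  define j where "j = nat \<lfloor>real N * r\<rfloor>"
  have Npos: "real N > 0" using N2 by simp
  have Nr1: "1 < real N * r" using r1 Npos by (simp add: field_simps)
  have NrN: "real N * r < real N" using r2 Npos by simp
  have j1: "1 \<le> j" unfolding j_def using Nr1 by linarith
  have jle: "real j \<le> real N * r" unfolding j_def using Nr1 by linarith
  have jN: "j < N" using jle NrN by linarith
  have r0: "0 \<le> r" using zero_less_mult_pos[of "real N" r] Nr1 Npos by simp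
  have jr: "real j / real N \<le> r" using jle Npos by (simp add: field_simps)
  have low: "bt N (real j / real N) (Suc j) \<le> bt N r (Suc j)"
    using jr r2 by (intro bt_mono) auto
  have "1/4 < bt N (real j / real N) (Suc j) \<or> (N = 2 \<and> 1/4 < bt N r (Suc j))"
  proof (cases "j = 1")
    case True
    show ?thesis
    proof (cases "N = 2")
      case True
      then have "bt N r (Suc j) = r^2" using \<open>j = 1\<close> by (simp add: numeral_eq_Suc power2_eq_square)
      moreover have "1/2 < r" using r1 True by simp
      moreover have "(1/2)^2 < r^2" using \<open>1/2 < r\<close> by (intro power_strict_mono) auto
      ultimately have "1/4 < bt N r (Suc j)" by (simp add: power2_eq_square)
      then show ?thesis using True by simp
    next
      case False
      then have N3: "3 \<le> N" using N2 by simp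
      have "bt 3 (real 1 / real 3) (Suc 1) \<le> bt N (real 1 / real N) (Suc 1)"
        by (rule bt_chain) (use N3 in auto)
      then have "7/27 \<le> bt N (real j / real N) (Suc j)" using bt_3_1 \<open>j = 1\<close> by (simp add: numeral_eq_Suc)
      then show ?thesis by simp
    qed
  next
    case False
    then have j2: "2 \<le> j" using j1 by simp
    have "bt (Suc j) (real j / real (Suc j)) (Suc j) \<le> bt N (real j / real N) (Suc j)"
      by (rule bt_chain) (use j1 jN in auto)
    moreover have "bt (Suc j) (real j / real (Suc j)) (Suc j) = (real j / (real j + 1)) ^ (j+1)"
      by (simp add: bt_diag add.commute)
    moreover have "8/27 \<le> (real j / (real j + 1)) ^ (j+1)" using pow_seq_bound j2 by simp
    ultimately show ?thesis by simp
  qed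
  then show ?thesis using low unfolding j_def by auto
qed



context prob_space
begin

lemma indep_events_pair:
  fixes z :: "nat \<Rightarrow> 'a \<Rightarrow> bool"
  assumes ind: "indep_vars (\<lambda>_. count_space UNIV) z I0"
    and J: "finite J" "t \<notin> J" "insert t J \<subseteq> I0"
  shows "prob {\<omega>\<in>space M. z t \<omega> = v \<and> c \<le> card (J \<inter> {i. \<not> z i \<omega>})}
       = prob {\<omega>\<in>space M. z t \<omega> = v} * prob {\<omega>\<in>space M. c \<le> card (J \<inter> {i. \<not> z i \<omega>})}"
proof -
  define X where "X i \<omega> = (of_bool (\<not> z i \<omega>) :: real)" for i \<omega>
  have indX: "indep_vars (\<lambda>_. borel) X (insert t J)"
    unfolding X_def
    by (rule indep_vars_compose2[OF indep_vars_subset[OF ind J(3)]]) (simp add: measurable_count_space_eq1)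
  have iv: "indep_var borel (X t) borel (\<lambda>\<omega>. \<Sum>i\<in>J. X i \<omega>)"
    by (rule indep_vars_sum[OF J(1) J(2) indX])
  have S: "(\<Sum>i\<in>J. X i \<omega>) = real (card (J \<inter> {i. \<not> z i \<omega>}))" for \<omega>
    unfolding X_def using J(1) by simp
  have "prob ((\<lambda>x. (X t x, \<Sum>i\<in>J. X i x)) -` ({of_bool (\<not> v)} \<times> {real c..}) \<inter> space M) =
    prob (X t -` {of_bool (\<not> v)} \<inter> space M) * prob ((\<lambda>x. \<Sum>i\<in>J. X i x) -` {real c..} \<inter> space M)"
    by (rule indep_varD[OF iv]) auto
  moreover have "(\<lambda>x. (X t x, \<Sum>i\<in>J. X i x)) -` ({of_bool (\<not> v)} \<times> {real c..}) \<inter> space M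
      = {\<omega>\<in>space M. z t \<omega> = v \<and> c \<le> card (J \<inter> {i. \<not> z i \<omega>})}"
    unfolding S by (auto simp: X_def)
  moreover have "X t -` {of_bool (\<not> v)} \<inter> space M = {\<omega>\<in>space M. z t \<omega> = v}"
    by (auto simp: X_def)
  moreover have "(\<lambda>x. \<Sum>i\<in>J. X i x) -` {real c..} \<inter> space M = {\<omega>\<in>space M. c \<le> card (J \<inter> {i. \<not> z i \<omega>})}"
    unfolding S by auto
  ultimately show ?thesis by simp
qed

lemma card_event_sets:
  fixes z :: "nat \<Rightarrow> 'a \<Rightarrow> bool"
  assumes meas: "\<And>i. i \<in> J \<Longrightarrow> z i \<in> measurable M (count_space UNIV)" and J: "finite J"
  shows "{\<omega>\<in>space M. c \<le> card (J \<inter> {i. \<not> z i \<omega>})} \<in> events"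
proof -
  have m: "(\<lambda>\<omega>. \<Sum>i\<in>J. (of_bool (\<not> z i \<omega>) :: real)) \<in> borel_measurable M"
  proof (intro borel_measurable_sum)
    fix i assume "i \<in> J"
    have "(\<lambda>b. (of_bool (\<not> b) :: real)) \<in> measurable (count_space UNIV) borel" by simp
    then show "(\<lambda>\<omega>. (of_bool (\<not> z i \<omega>) :: real)) \<in> borel_measurable M"
      by (rule measurable_compose[OF meas[OF \<open>i \<in> J\<close>]])
  qed
  have "{\<omega>\<in>space M. real c \<le> (\<Sum>i\<in>J. (of_bool (\<not> z i \<omega>) :: real))} \<in> events"
    using m by measurable
  then show ?thesis using J by simp
qed

lemma prob_lower:
  fixes z :: "nat \<Rightarrow> 'a \<Rightarrow> bool"
  assumes ind: "indep_vars (\<lambda>_. count_space UNIV) z I0"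
    and dist: "\<And>i. i \<in> I0 \<Longrightarrow> distr M (count_space UNIV) (z i) = measure_pmf (bernoulli_pmf (q i))"
    and qr: "\<And>i. i \<in> I0 \<Longrightarrow> 0 \<le> q i \<and> q i \<le> 1"
    and r: "0 \<le> r" "r \<le> 1" "\<And>i. i \<in> I0 \<Longrightarrow> r \<le> 1 - q i"
    and J: "finite J" "J \<subseteq> I0"
  shows "bt (card J) r k \<le> prob {\<omega>\<in>space M. k \<le> card (J \<inter> {i. \<not> z i \<omega>})}"
  using J
proof (induction J arbitrary: k rule: finite_induct)
  case empty
  show ?case
  proof (cases k)
    case 0 then show ?thesis by (simp add: prob_space)
  next
    case (Suc k') then show ?thesis by simp
  qed
next
  case (insert t J)
  have meas: "\<And>i. i \<in> I0 \<Longrightarrow> z i \<in> measurable M (count_space UNIV)"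
    using ind by (auto simp: indep_vars_def)
  have tI: "t \<in> I0" and JI: "J \<subseteq> I0" using insert by auto
  have pz: "prob {\<omega>\<in>space M. z t \<omega> = True} = q t"
  proof -
    have "measure (distr M (count_space UNIV) (z t)) {True} = measure M (z t -` {True} \<inter> space M)"
      by (rule measure_distr[OF meas[OF tI]]) auto
    moreover have "measure (distr M (count_space UNIV) (z t)) {True} = q t"
      unfolding dist[OF tI] measure_pmf_single using qr[OF tI] by simp
    moreover have "z t -` {True} \<inter> space M = {\<omega>\<in>space M. z t \<omega> = True}" by auto
    ultimately show ?thesis by simp
  qed
  have ev_t: "{\<omega>\<in>space M. z t \<omega> = True} \<in> events"
    using meas[OF tI] by measurable
  have pnz: "prob {\<omega>\<in>space M. z t \<omega> = False} = 1 - q t"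
  proof -
    have "{\<omega>\<in>space M. z t \<omega> = False} = space M - {\<omega>\<in>space M. z t \<omega> = True}" by auto
    then show ?thesis using prob_compl[OF ev_t] pz by simp
  qed
  show ?case
  proof (cases k)
    case 0
    then have "{\<omega>\<in>space M. k \<le> card (insert t J \<inter> {i. \<not> z i \<omega>})} = space M" by auto
    then show ?thesis using 0 by (simp add: prob_space)
  next
    case (Suc k')
    define P1 where "P1 = prob {\<omega>\<in>space M. Suc k' \<le> card (J \<inter> {i. \<not> z i \<omega>})}"
    define P0 where "P0 = prob {\<omega>\<in>space M. k' \<le> card (J \<inter> {i. \<not> z i \<omega>})}"
    have IH1: "bt (card J) r (Suc k') \<le> P1" unfolding P1_def using insert by auto
    have IH0: "bt (card J) r k' \<le> P0" unfolding P0_def using insert by auto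
    have evJ: "{\<omega>\<in>space M. c \<le> card (J \<inter> {i. \<not> z i \<omega>})} \<in> events" for c
      by (rule card_event_sets) (use meas JI insert in auto)
    have P10: "P1 \<le> P0" unfolding P1_def P0_def
      by (rule finite_measure_mono[OF _ evJ]) auto
    have ind2: "\<And>v c. prob {\<omega>\<in>space M. z t \<omega> = v \<and> c \<le> card (J \<inter> {i. \<not> z i \<omega>})}
       = prob {\<omega>\<in>space M. z t \<omega> = v} * prob {\<omega>\<in>space M. c \<le> card (J \<inter> {i. \<not> z i \<omega>})}"
      by (rule indep_events_pair[OF ind]) (use insert tI in auto)
    define A1 where "A1 = {\<omega>\<in>space M. z t \<omega> = True \<and> Suc k' \<le> card (J \<inter> {i. \<not> z i \<omega>})}"
    define A0 where "A0 = {\<omega>\<in>space M. z t \<omega> = False \<and> k' \<le> card (J \<inter> {i. \<not> z i \<omega>})}"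
    have cardins: "card (insert t J \<inter> {i. \<not> z i \<omega>}) = card (J \<inter> {i. \<not> z i \<omega>}) + (if z t \<omega> then 0 else 1)" for \<omega>
      using insert by (auto simp: Int_insert_left)
    have split: "{\<omega>\<in>space M. k \<le> card (insert t J \<inter> {i. \<not> z i \<omega>})} = A1 \<union> A0"
      unfolding A1_def A0_def cardins Suc by auto
    have A1e: "A1 \<in> events" and A0e: "A0 \<in> events"
    proof -
      have a: "{\<omega>\<in>space M. c \<le> card (J \<inter> {i. \<not> z i \<omega>})} \<in> events" for c
        by (rule card_event_sets) (use meas JI insert in auto)
      have b: "{\<omega>\<in>space M. z t \<omega> = v} \<in> events" for v
        using meas[OF tI] by measurable
      have "A1 = {\<omega>\<in>space M. z t \<omega> = True} \<inter> {\<omega>\<in>space M. Suc k' \<le> card (J \<inter> {i. \<not> z i \<omega>})}"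
        unfolding A1_def by auto
      then show "A1 \<in> events" using sets.Int[OF b[of True] a[of "Suc k'"]] by simp
      have "A0 = {\<omega>\<in>space M. z t \<omega> = False} \<inter> {\<omega>\<in>space M. k' \<le> card (J \<inter> {i. \<not> z i \<omega>})}"
        unfolding A0_def by auto
      then show "A0 \<in> events" using sets.Int[OF b[of False] a[of "k'"]] by simp
    qed
    have "prob (A1 \<union> A0) = prob A1 + prob A0"
      by (rule finite_measure_Union[OF A1e A0e]) (auto simp: A1_def A0_def)
    also have "\<dots> = q t * P1 + (1 - q t) * P0"
      unfolding A1_def A0_def P1_def P0_def ind2 pz pnz by simp
    finally have eq: "prob {\<omega>\<in>space M. k \<le> card (insert t J \<inter> {i. \<not> z i \<omega>})} = q t * P1 + (1 - q t) * P0"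
      using split by simp
    have "bt (card (insert t J)) r k = (1-r) * bt (card J) r (Suc k') + r * bt (card J) r k'"
      using insert Suc by simp
    also have "\<dots> \<le> (1-r) * P1 + r * P0"
      using IH1 IH0 r by (intro add_mono mult_left_mono) auto
    also have "\<dots> = P1 + r * (P0 - P1)" by (simp add: algebra_simps)
    also have "\<dots> \<le> P1 + (1 - q t) * (P0 - P1)"
      using P10 r(3)[OF tI] by (intro add_left_mono mult_right_mono) auto
    also have "\<dots> = q t * P1 + (1 - q t) * P0" by (simp add: algebra_simps)
    finally show ?thesis using eq by simp
  qed
qed

end


theorem corollary1:
  fixes M :: "'a measure" and N :: nat and q :: "nat \<Rightarrow> real" and z :: "nat \<Rightarrow> 'a \<Rightarrow> bool"
  assumes "prob_space M"
    and "N \<ge> 1"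
    and "\<And>i. i \<in> {1..N} \<Longrightarrow> 0 < q i \<and> q i < 1"
    and "prob_space.indep_vars M (\<lambda>_. count_space UNIV) z {1..N}"
    and "\<And>i. i \<in> {1..N} \<Longrightarrow>
           distr M (count_space UNIV) (z i) = measure_pmf (bernoulli_pmf (q i))"
    and "(MAX i\<in>{1..N}. q i) < 1 - 1 / real N"
  shows "measure M {\<omega> \<in> space M. (\<Sum>i=1..N. of_bool (z i \<omega>)) < real N * (MAX i\<in>{1..N}. q i)}
           > 1 / 4"
proof -
  interpret prob_space M by (rule assms(1))
  define p where "p = (MAX i\<in>{1..N}. q i)"
  have fin: "finite {1..N}" by simp
  have ne: "{1..N} \<noteq> {}" using assms(2) by simp
  have "p \<in> q ` {1..N}" unfolding p_def using fin ne by (intro Max_in) auto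
  then obtain i0 where i0: "i0 \<in> {1..N}" "p = q i0" by auto
  have p0: "0 < p" "p < 1" using assms(3)[OF i0(1)] i0(2) by auto
  have qle: "q i \<le> p" if "i \<in> {1..N}" for i
    unfolding p_def using fin that by (intro Max_ge) auto
  have pN: "p < 1 - 1 / real N" using assms(6) unfolding p_def .
  have N2: "2 \<le> N"
  proof (rule ccontr)
    assume "\<not> 2 \<le> N"
    then have "N = 1" using assms(2) by simp
    then show False using pN p0 by simp
  qed
  define r where "r = 1 - p"
  have r1: "1 / real N < r" using pN unfolding r_def by simp
  have r2: "r < 1" using p0 unfolding r_def by simp
  have r0: "0 \<le> r" using p0 unfolding r_def by simp
  define j where "j = nat \<lfloor>real N * r\<rfloor>"
  have main: "1/4 < bt N r (Suc j)" unfolding j_def by (rule bin_main[OF N2 r1 r2])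
  have low: "bt (card {1..N}) r (Suc j) \<le> prob {\<omega>\<in>space M. Suc j \<le> card ({1..N} \<inter> {i. \<not> z i \<omega>})}"
  proof (rule prob_lower[OF assms(4) assms(5)])
    show "\<And>i. i \<in> {1..N} \<Longrightarrow> 0 \<le> q i \<and> q i \<le> 1" using assms(3) by fastforce
    show "0 \<le> r" "r \<le> 1" using r0 r2 by auto
    show "\<And>i. i \<in> {1..N} \<Longrightarrow> r \<le> 1 - q i" using qle unfolding r_def by fastforce
  qed auto
  have Npos: "real N > 0" using N2 by simp
  have Nr1: "1 < real N * r" using r1 Npos by (simp add: field_simps)
  have fl1: "real j \<le> real N * r" unfolding j_def using Nr1 by linarith
  have fl2: "real N * r < real j + 1" unfolding j_def using Nr1 by linarith
  have seteq: "{\<omega> \<in> space M. (\<Sum>i=1..N. of_bool (z i \<omega>)) < real N * p}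
      = {\<omega>\<in>space M. Suc j \<le> card ({1..N} \<inter> {i. \<not> z i \<omega>})}"
  proof (intro Collect_cong conj_cong refl)
    fix \<omega>
    have s1: "(\<Sum>i=1..N. (of_bool (z i \<omega>) :: real)) + (\<Sum>i=1..N. (of_bool (\<not> z i \<omega>) :: real)) = real N"
    proof -
      have "(\<Sum>i=1..N. (of_bool (z i \<omega>) :: real)) + (\<Sum>i=1..N. (of_bool (\<not> z i \<omega>) :: real))
          = (\<Sum>i=1..N. (of_bool (z i \<omega>) + of_bool (\<not> z i \<omega>) :: real))"
        by (rule sum.distrib[symmetric])
      also have "\<dots> = (\<Sum>i=1..N. (1::real))" by (intro sum.cong) auto
      finally show ?thesis by simp
    qed
    have s2: "(\<Sum>i=1..N. (of_bool (\<not> z i \<omega>) :: real)) = real (card ({1..N} \<inter> {i. \<not> z i \<omega>}))"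
      by simp
    define b where "b = card ({1..N} \<inter> {i. \<not> z i \<omega>})"
    have "(\<Sum>i=1..N. (of_bool (z i \<omega>) :: real)) = real N - real b"
      using s1 s2 unfolding b_def by linarith
    moreover have "real N * p = real N - real N * r" unfolding r_def by (simp add: algebra_simps)
    ultimately have "((\<Sum>i=1..N. (of_bool (z i \<omega>) :: real)) < real N * p) \<longleftrightarrow> real N * r < real b"
      by linarith
    also have "\<dots> \<longleftrightarrow> Suc j \<le> b"
    proof
      assume "real N * r < real b"
      then have "real j < real b" using fl1 by linarith
      then show "Suc j \<le> b" by simp
    next
      assume "Suc j \<le> b"
      then have "real j + 1 \<le> real b" by simp
      then show "real N * r < real b" using fl2 by linarith
    qed
    finally show "((\<Sum>i=1..N. (of_bool (z i \<omega>) :: real)) < real N * p) \<longleftrightarrow> Suc j \<le> card ({1..N} \<inter> {i. \<not> z i \<omega>})"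
      unfolding b_def .
  qed
  have "1/4 < prob {\<omega>\<in>space M. Suc j \<le> card ({1..N} \<inter> {i. \<not> z i \<omega>})}"
    using main low by simp
  then show ?thesis unfolding p_def[symmetric] seteq by simp
qed

end
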